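(* Let $\mathbf{X}$ be a Banach space and $\emptyset\ne\mathcal{S}\subset\mathbf{X}$. Assume that either 1. $\mathcal{S}$ is closed, bounded and convex; or 2. $\mathcal{S}=\{\mathbf{x}\in\mathbf{X}:\|\mathbf{x}\|_\ast\le r\}$ for some $r\in(0,\infty)$ and a map $\|\cdot\|_\ast:\mathbf{X}\to[0,\infty]$ such that (a) there is $\kappa\ge1$ with $\|\alpha\mathbf{x}\|_\ast=|\alpha|\|\mathbf{x}\|_\ast$ and $\|\mathbf{x}+\mathbf{y}\|_\ast\le\kappa(\|\mathbf{x}\|_\ast+\|\mathbf{y}\|_\ast)$ for all $\alpha\in\mathbb{R}$, $\mathbf{x},\mathbf{y}\in\mathbf{X}$; (b) there is $C\ge1$ with $\|\mathbf{x}\|_{\mathbf{X}}\le C\|\mathbf{x}\|_\ast$ for all $\mathbf{x}\in\mathbf{X}$; (c) $\mathcal{S}\subset\mathbf{X}$ is closed; (d) $\|\mathbf{x}\|_\ast\to\|\mathbf{x}_0\|_\ast$ whenever $\|\mathbf{x}-\mathbf{x}_0\|_\ast\to0$. Set $s^\ast:=s^\ast_{\mathbf{X}}(\mathcal{S})$. Then for each codec $\mathcal{C}=((E_R,D_R))_{R\in\mathbb{N}}$ there is $\mathbf{x}=\mathbf{x}(\mathcal{C})\in\mathcal{S}$ such that for each $\ell\in\mathbb{N}$, $\|\mathbf{x}-D_R(E_R(\mathbf{x}))\|_{\mathbf{X}}\ge R^{-(s^\ast+\ell^{-1})}$ for infinitely many $R\in\mathbb{N}$.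
   Context: For a real Banach space $\mathbf{X}$ and $\mathcal{S}\subset\mathbf{X}$: a codec is a sequence $((E_R,D_R))_{R\in\mathbb{N}}$ of maps $E_R:\mathcal{S}\to\{0,1\}^R$, $D_R:\{0,1\}^R\to\mathbf{X}$; distortion $\delta_{\mathcal{S},\mathbf{X}}(E_R,D_R)=\sup_{\mathbf{x}\in\mathcal{S}}\|\mathbf{x}-D_R(E_R(\mathbf{x}))\|_{\mathbf{X}}$; optimal compression rate $s^\ast_{\mathbf{X}}(\mathcal{S})=\sup\{s\ge0:\exists\text{ codec with }\sup_RR^s\delta_{\mathcal{S},\mathbf{X}}(E_R,D_R)<\infty\}\in[0,\infty]$. *)

theory Defs
  imports "HOL-Analysis.Analysis" "HOL-Library.Extended_Real" "HOL-Library.Extended_Nonnegative_Real"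
begin

text \<open>Bit strings of length R are modelled as bool lists of length R.
  A codec is a pair of sequences E :: nat => 'a => bool list (encoders, E R maps S into
  {0,1}^R) and D :: nat => bool list => 'a (decoders).\<close>

definition is_codec :: "'a set \<Rightarrow> (nat \<Rightarrow> 'a \<Rightarrow> bool list) \<Rightarrow> bool" where
  "is_codec S E \<longleftrightarrow> (\<forall>R\<ge>1. \<forall>x\<in>S. length (E R x) = R)"

definition distortion :: "'a set \<Rightarrow> ('a \<Rightarrow> bool list) \<Rightarrow> (bool list \<Rightarrow> 'a::real_normed_vector) \<Rightarrow> ereal" where
  "distortion S E\<^sub>R D\<^sub>R = (SUP x\<in>S. ereal (norm (x - D\<^sub>R (E\<^sub>R x))))"

definition optimal_rate :: "'a::real_normed_vector set \<Rightarrow> ereal" where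
  "optimal_rate S = Sup {ereal s | s. s \<ge> 0 \<and> (\<exists>E D. is_codec S E \<and>
       (SUP R\<in>{1::nat..}. ereal (real R powr s) * distortion S (E R) (D R)) < \<infinity>)}"

end

theory Submission
  imports Defs
begin


lemma infdist_finite_attains:
  fixes A :: "'a::metric_space set"
  assumes "finite A" "A \<noteq> {}"
  obtains a where "a \<in> A" "infdist x A = dist x a"
proof -
  have "infdist x A = Min (dist x ` A)"
    using assms by (simp add: infdist_notempty cInf_eq_Min)
  moreover have "Min (dist x ` A) \<in> dist x ` A"
    using assms by (intro Min_in) auto
  ultimately show ?thesis using that by auto
qed

lemma rate_nonneg:
  assumes "optimal_rate S = ereal r"
  shows "r \<ge> 0"
proof (rule ccontr)
  assume "\<not> r \<ge> 0"
  let ?A = "{ereal s | s. s \<ge> 0 \<and> (\<exists>E D. is_codec S E \<and>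
       (SUP R\<in>{1::nat..}. ereal (real R powr s) * distortion S (E R) (D R)) < \<infinity>)}"
  have "?A = {}"
  proof (rule ccontr)
    assume "?A \<noteq> {}"
    then obtain e where "e \<in> ?A" by blast
    then have "e \<ge> 0" by auto
    moreover have "e \<le> Sup ?A" using \<open>e \<in> ?A\<close> by (rule Sup_upper)
    ultimately have "0 \<le> optimal_rate S" unfolding optimal_rate_def by simp
    with assms \<open>\<not> r \<ge> 0\<close> show False by simp
  qed
  have "optimal_rate S = Sup ?A" by (simp only: optimal_rate_def)
  also have "\<dots> = -\<infinity>" using \<open>?A = {}\<close> by (simp only: Sup_empty bot_ereal_def)
  finally have "optimal_rate S = -\<infinity>" .
  with assms show False by simp
qed

lemma key:
  fixes S :: "'a::banach set" and M :: real
  assumes Sne: "S \<noteq> {}" and Scl: "closed S" and M: "M \<ge> 0" and bnd: "\<forall>y\<in>S. norm y \<le> M"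
   and P: "\<And>U x0. open U \<Longrightarrow> x0 \<in> U \<Longrightarrow> x0 \<in> S \<Longrightarrow> \<exists>x1 t. t > 0 \<and> (\<forall>y\<in>S. x1 + t *\<^sub>R y \<in> U \<inter> S)"
   and cod: "is_codec S E"
  shows "\<exists>x\<in>S. \<forall>l::nat. l \<ge> 1 \<longrightarrow>
           (\<exists>\<^sub>\<infinity>R::nat. R \<ge> 1 \<and>
              (optimal_rate S = \<infinity> \<or>
               norm (x - D R (E R x)) \<ge> real R powr (- (real_of_ereal (optimal_rate S) + 1 / real l))))"
proof (cases "optimal_rate S = \<infinity>")
  case True
  then show ?thesis using Sne by (auto simp: INFM_nat_le intro: exI[of _ "Suc _"] le_SucI)
next
  case False
  define s0 where "s0 = real_of_ereal (optimal_rate S)"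
  have s0: "s0 \<ge> 0"
  proof (cases "optimal_rate S")
    case (real r) then show ?thesis using rate_nonneg[OF real] by (simp add: s0_def)
  qed (use False in \<open>auto simp: s0_def\<close>)
  define bd where "bd l R = real R powr (-(s0 + 1/real l))" for l R :: nat
  define V where "V R = D R ` {bs. length bs = R}" for R
  have Vfin: "finite (V R)" for R
  proof -
    have "{bs::bool list. length bs = R} = {xs. set xs \<subseteq> UNIV \<and> length xs = R}" by auto
    then have "finite {bs::bool list. length bs = R}" using finite_lists_length_eq[of "UNIV::bool set" R] by simp
    then show ?thesis unfolding V_def by simp
  qed
  have Vne: "V R \<noteq> {}" for R
    unfolding V_def by (auto intro!: exI[of _ "replicate R False"])
  define B where "B l N = {x\<in>S. \<forall>R\<ge>N. infdist x (V R) \<le> bd l R}" for l N :: nat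
  define G where "G = (\<lambda>(l,N). B l N) ` ({1::nat..} \<times> {1::nat..})"
  show ?thesis
  proof (rule ccontr)
    assume neg: "\<not> ?thesis"
    have cover: "S \<subseteq> \<Union>G"
    proof
      fix x assume x: "x \<in> S"
      from neg x False obtain l :: nat where l: "l \<ge> 1"
        "\<not> (\<exists>\<^sub>\<infinity>R::nat. R \<ge> 1 \<and> norm (x - D R (E R x)) \<ge> bd l R)"
        by (auto simp: bd_def s0_def)
      then obtain m where m: "\<And>R. R > m \<Longrightarrow> R \<ge> 1 \<Longrightarrow> \<not> (norm (x - D R (E R x)) \<ge> bd l R)"
        unfolding INFM_nat by blast
      have "x \<in> B l (Suc m)"
        unfolding B_def
      proof (intro CollectI conjI allI impI x)
        fix R assume R: "Suc m \<le> R"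
        have "length (E R x) = R" using cod x R unfolding is_codec_def by auto
        then have "D R (E R x) \<in> V R" unfolding V_def by auto
        then have "infdist x (V R) \<le> dist x (D R (E R x))" by (rule infdist_le)
        also have "\<dots> \<le> bd l R" using m[of R] R by (auto simp: dist_norm)
        finally show "infdist x (V R) \<le> bd l R" .
      qed
      then show "x \<in> \<Union>G" unfolding G_def using l by force
    qed
    have GS: "\<Union>G = S" using cover unfolding G_def B_def by auto
    have "\<exists>T\<in>G. (top_of_set S) interior_of T \<noteq> {}"
    proof (rule ccontr)
      assume nT: "\<not> ?thesis"
      then have "(top_of_set S) interior_of \<Union>G = {}"
      proof (intro Baire_category_alt conjI)
        show "completely_metrizable_space (top_of_set S) \<or>
              locally_compact_space (top_of_set S) \<and> regular_space (top_of_set S)"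
          using Scl closed_closedin completely_metrizable_space_closedin completely_metrizable_space_euclidean by blast
        show "countable G" unfolding G_def by simp
        fix T assume "T \<in> G"
        then obtain l N where T: "T = B l N" unfolding G_def by auto
        have "T = S \<inter> (\<Inter>R\<in>{N..}. {x. infdist x (V R) \<le> bd l R})" unfolding T B_def by auto
        moreover have "closed (\<Inter>R\<in>{N..}. {x. infdist x (V R) \<le> bd l R})"
          by (intro closed_INT ballI closed_Collect_le continuous_on_infdist continuous_on_id continuous_on_const)
        ultimately show "closedin (top_of_set S) T" by (simp add: closedin_closed_Int)
      qed (use nT in auto)
      then show False using GS Sne by (simp add: interior_of_topspace[of "top_of_set S", simplified])
    qed
    then obtain l N where lN: "l \<ge> 1" "N \<ge> 1" and int: "(top_of_set S) interior_of (B l N) \<noteq> {}"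
      unfolding G_def by auto
    then obtain x0 where x0: "x0 \<in> (top_of_set S) interior_of (B l N)" by blast
    have "openin (top_of_set S) ((top_of_set S) interior_of (B l N))" by simp
    then obtain U where U: "open U" "(top_of_set S) interior_of (B l N) = S \<inter> U"
      unfolding openin_open by blast
    have sub: "S \<inter> U \<subseteq> B l N" using U(2) interior_of_subset by metis
    from x0 U have "x0 \<in> U" "x0 \<in> S" by auto
    from P[OF U(1) this] obtain x1 t where t: "t > 0" and x1: "\<And>y. y \<in> S \<Longrightarrow> x1 + t *\<^sub>R y \<in> U \<inter> S"
      by blast
    have ex: "\<exists>bs. length bs = R \<and> norm (x1 + t *\<^sub>R y - D R bs) \<le> bd l R" if "R \<ge> N" "y \<in> S" for R y
    proof -
      have "x1 + t *\<^sub>R y \<in> B l N" using x1[OF that(2)] sub by auto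
      then have "infdist (x1 + t *\<^sub>R y) (V R) \<le> bd l R" using that(1) unfolding B_def by auto
      moreover obtain v where "v \<in> V R" "infdist (x1 + t *\<^sub>R y) (V R) = dist (x1 + t *\<^sub>R y) v"
        using infdist_finite_attains[OF Vfin Vne] by blast
      ultimately show ?thesis unfolding V_def by (auto simp: dist_norm)
    qed
    define E' where "E' R y = (if R \<ge> N then (SOME bs. length bs = R \<and> norm (x1 + t *\<^sub>R y - D R bs) \<le> bd l R) else replicate R False)" for R y
    define D' where "D' R bs = (if R \<ge> N then (1/t) *\<^sub>R (D R bs - x1) else 0)" for R bs
    have good: "length (E' R y) = R \<and> norm (x1 + t *\<^sub>R y - D R (E' R y)) \<le> bd l R" if "R \<ge> N" "y \<in> S" for R y
      using someI_ex[OF ex[OF that]] that(1) unfolding E'_def by simp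
    have codec': "is_codec S E'"
      unfolding is_codec_def using good by (auto simp: E'_def)
    define s where "s = s0 + 1 / real l"
    have s: "s \<ge> 0" using s0 by (simp add: s_def)
    have err: "norm (y - D' R (E' R y)) \<le> (if R \<ge> N then bd l R / t else M)" if "y \<in> S" for R y
    proof (cases "R \<ge> N")
      case True
      have "y - D' R (E' R y) = (1/t) *\<^sub>R (x1 + t *\<^sub>R y - D R (E' R y))"
        using True t by (simp add: D'_def algebra_simps)
      then have "norm (y - D' R (E' R y)) = norm (x1 + t *\<^sub>R y - D R (E' R y)) / t"
        using t by simp
      also have "\<dots> \<le> bd l R / t" using good[OF True that] t by (simp add: divide_right_mono)
      finally show ?thesis using True by simp
    next
      case False
      then show ?thesis using bnd that by (simp add: D'_def)
    qed
    define K where "K = max (1/t) (real N powr s * M)"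
    have termb: "ereal (real R powr s) * distortion S (E' R) (D' R) \<le> ereal K" if R: "R \<ge> 1" for R :: nat
    proof -
      have "distortion S (E' R) (D' R) \<le> ereal (if R \<ge> N then bd l R / t else M)"
        unfolding distortion_def by (rule SUP_least) (use err in simp)
      then have "ereal (real R powr s) * distortion S (E' R) (D' R)
          \<le> ereal (real R powr s) * ereal (if R \<ge> N then bd l R / t else M)"
        by (rule ereal_mult_left_mono) simp
      also have "\<dots> = ereal (real R powr s * (if R \<ge> N then bd l R / t else M))" by simp
      also have "real R powr s * (if R \<ge> N then bd l R / t else M) \<le> K"
      proof (cases "R \<ge> N")
        case True
        have "real R powr s * (bd l R / t) = (real R powr s * real R powr (-s)) / t"
          by (simp add: bd_def s_def)
        also have "\<dots> = 1 / t" using R by (simp add: powr_add[symmetric])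
        finally have eq: "real R powr s * (bd l R / t) = 1 / t" .
        have "real R powr s * (if R \<ge> N then bd l R / t else M) = 1 / t" using True eq by simp
        then show ?thesis unfolding K_def by linarith
      next
        case False
        have "real R powr s \<le> real N powr s" using False s by (intro powr_mono2) auto
        then have "real R powr s * M \<le> real N powr s * M" using M by (rule mult_right_mono)
        then show ?thesis using False by (simp add: K_def)
      qed
      then have "ereal (real R powr s * (if R \<ge> N then bd l R / t else M)) \<le> ereal K" by simp
      finally show ?thesis .
    qed
    have "(SUP R\<in>{1::nat..}. ereal (real R powr s) * distortion S (E' R) (D' R)) \<le> ereal K"
      by (rule SUP_least) (use termb in auto)
    then have "(SUP R\<in>{1::nat..}. ereal (real R powr s) * distortion S (E' R) (D' R)) < \<infinity>"
      using order.strict_trans1 by fastforce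
    then have "ereal s \<le> optimal_rate S"
      unfolding optimal_rate_def using s codec' by (intro Sup_upper) blast
    moreover have "optimal_rate S < ereal s"
    proof (cases "optimal_rate S")
      case (real r) then show ?thesis using lN by (simp add: s_def s0_def)
    qed (use False in auto)
    ultimately show False by simp
  qed
qed



lemma case1P:
  fixes S :: "'a::real_normed_vector set"
  assumes cv: "convex S" and M: "M \<ge> 0" and bnd: "\<forall>y\<in>S. norm y \<le> M"
    and U: "open U" "x0 \<in> U" "x0 \<in> S"
  shows "\<exists>x1 t. t > 0 \<and> (\<forall>y\<in>S. x1 + t *\<^sub>R y \<in> U \<inter> S)"
proof -
  obtain e where e: "e > 0" "ball x0 e \<subseteq> U" using U open_contains_ball by blast
  define t where "t = min 1 (e / (2*M+1))"
  have t: "t > 0" "t \<le> 1" using e M by (auto simp: t_def)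
  have te: "t * (2*M) < e"
  proof -
    have "t * (2*M) \<le> e / (2*M+1) * (2*M)" using M by (intro mult_right_mono) (auto simp: t_def)
    also have "\<dots> < e" using e M by (simp add: field_simps)
    finally show ?thesis .
  qed
  show ?thesis
  proof (intro exI conjI ballI)
    show "t > 0" by (fact t)
    fix y assume y: "y \<in> S"
    have "(1 - t) *\<^sub>R x0 + t *\<^sub>R y \<in> S"
      using cv U(3) y t unfolding convex_def by auto
    moreover have "dist x0 ((1 - t) *\<^sub>R x0 + t *\<^sub>R y) < e"
    proof -
      have "x0 - ((1 - t) *\<^sub>R x0 + t *\<^sub>R y) = t *\<^sub>R (x0 - y)" by (simp add: algebra_simps)
      then have "dist x0 ((1 - t) *\<^sub>R x0 + t *\<^sub>R y) = t * norm (x0 - y)"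
        using t by (simp add: dist_norm)
      also have "\<dots> \<le> t * (2*M)"
      proof -
        have "norm (x0 - y) \<le> norm x0 + norm y" by (rule norm_triangle_ineq4)
        also have "\<dots> \<le> 2*M"
        proof -
          have "norm x0 \<le> M" using bnd U(3) by blast
          moreover have "norm y \<le> M" using bnd y by blast
          ultimately show ?thesis by linarith
        qed
        finally show ?thesis using t by (intro mult_left_mono) auto
      qed
      finally show ?thesis using te by simp
    qed
    ultimately show "(1 - t) *\<^sub>R x0 + t *\<^sub>R y \<in> U \<inter> S" using e by auto
  qed
qed



lemma case2_bnd:
  fixes nstar :: "'a::real_normed_vector \<Rightarrow> ennreal"
  assumes r: "r > 0" and Sdef: "S = {x. nstar x \<le> ennreal r}"
   and C: "C \<ge> 1" and nC: "\<forall>x. ennreal (norm x) \<le> ennreal C * nstar x"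
  shows "\<forall>y\<in>S. norm y \<le> C * r"
proof
  fix y assume "y \<in> S"
  then have "nstar y \<le> ennreal r" using Sdef by auto
  then have "ennreal C * nstar y \<le> ennreal C * ennreal r" by (rule mult_left_mono) simp
  also have "\<dots> = ennreal (C * r)" using C r by (simp add: ennreal_mult)
  finally have "ennreal (norm y) \<le> ennreal (C * r)" using nC order_trans by blast
  then show "norm y \<le> C * r" using C r by (simp add: ennreal_le_iff)
qed

lemma case2P:
  fixes nstar :: "'a::real_normed_vector \<Rightarrow> ennreal"
  assumes r: "r > 0" and Sdef: "S = {x. nstar x \<le> ennreal r}"
   and hom: "\<forall>\<alpha>::real. \<forall>x. nstar (\<alpha> *\<^sub>R x) = ennreal \<bar>\<alpha>\<bar> * nstar x"
   and C: "C \<ge> 1" and nC: "\<forall>x. ennreal (norm x) \<le> ennreal C * nstar x"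
   and cont: "\<forall>xs x0. ((\<lambda>n. nstar (xs n - x0)) \<longlonglongrightarrow> 0) \<longrightarrow> ((\<lambda>n. nstar (xs n)) \<longlonglongrightarrow> nstar x0)"
   and U: "open U" "x0 \<in> U" "x0 \<in> S"
  shows "\<exists>x1 t. t > 0 \<and> (\<forall>y\<in>S. x1 + t *\<^sub>R y \<in> U \<inter> S)"
proof -
  have bnd: "\<forall>y\<in>S. norm y \<le> C * r" by (rule case2_bnd[OF r Sdef C nC])
  obtain e where e: "e > 0" "ball x0 e \<subseteq> U" using U open_contains_ball by blast
  define d where "d = min (1/2) (e / (2 * (norm x0 + 1)))"
  have pos: "e / (2 * (norm x0 + 1)) > 0" using e by (intro divide_pos_pos) (auto intro: add_nonneg_pos)
  have d: "d > 0" "d \<le> 1/2" using pos unfolding d_def by (simp_all only: min_less_iff_conj min.cobounded1) simp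
  have dx: "d * norm x0 < e / 2"
  proof -
    have "d * norm x0 \<le> e / (2 * (norm x0 + 1)) * norm x0" by (intro mult_right_mono) (auto simp: d_def)
    also have "\<dots> = (e / 2) * (norm x0 / (norm x0 + 1))" by simp
    also have "\<dots> < (e / 2) * 1"
    proof (rule mult_strict_left_mono)
      have "norm x0 + 1 > 0" by (simp add: add_nonneg_pos)
      then show "norm x0 / (norm x0 + 1) < 1" by (simp add: divide_less_eq)
    qed (use e in simp)
    finally show ?thesis by simp
  qed
  define x1 where "x1 = (1 - d) *\<^sub>R x0"
  have nx1: "nstar x1 < ennreal r"
  proof -
    have "nstar x1 = ennreal (1 - d) * nstar x0" using hom d by (simp add: x1_def)
    also have "\<dots> \<le> ennreal (1 - d) * ennreal r" using U(3) Sdef by (intro mult_left_mono) auto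
    also have "\<dots> = ennreal ((1 - d) * r)" using d r by (simp add: ennreal_mult)
    also have "\<dots> < ennreal r" using d r by (subst ennreal_less_iff) auto
    finally show ?thesis .
  qed
  define t0 where "t0 = e / (2 * (C * r + 1))"
  have "C * r \<ge> 0" using C r by simp
  then have t0: "t0 > 0" unfolding t0_def using e by (intro divide_pos_pos) auto
  have t0b: "t0 * (C * r) < e / 2"
  proof -
    have "C * r \<ge> 0" using C r by simp
    then show ?thesis using e by (simp add: t0_def field_simps)
  qed
  have "\<exists>n::nat. \<forall>y\<in>S. nstar (x1 + (t0 / real (Suc n)) *\<^sub>R y) \<le> ennreal r"
  proof (rule ccontr)
    assume "\<not> ?thesis"
    then have "\<forall>n. \<exists>y. y \<in> S \<and> ennreal r < nstar (x1 + (t0 / real (Suc n)) *\<^sub>R y)"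
      by (auto simp: not_le)
    then obtain ys where ys: "\<And>n. ys n \<in> S" "\<And>n. ennreal r < nstar (x1 + (t0 / real (Suc n)) *\<^sub>R ys n)"
      by metis
    define xs where "xs n = x1 + (t0 / real (Suc n)) *\<^sub>R ys n" for n
    have up: "nstar (xs n - x1) \<le> ennreal (t0 * r / real (Suc n))" for n
    proof -
      have "nstar (xs n - x1) = ennreal (t0 / real (Suc n)) * nstar (ys n)"
        using hom t0 by (simp add: xs_def)
      also have "\<dots> \<le> ennreal (t0 / real (Suc n)) * ennreal r" using ys(1) Sdef by (intro mult_left_mono) auto
      also have "\<dots> = ennreal (t0 * r / real (Suc n))" using t0 r by (simp add: ennreal_mult[symmetric])
      finally show ?thesis .
    qed
    have "(\<lambda>n. t0 * r / real (Suc n)) \<longlonglongrightarrow> 0"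
      using LIMSEQ_Suc[OF lim_const_over_n[of "t0 * r"]] by simp
    then have g: "(\<lambda>n. ennreal (t0 * r / real (Suc n))) \<longlonglongrightarrow> 0"
      using tendsto_ennrealI[of _ 0] by fastforce
    have "(\<lambda>n. nstar (xs n - x1)) \<longlonglongrightarrow> 0"
      by (rule tendsto_sandwich[OF _ _ tendsto_const g]) (use up in auto)
    then have "(\<lambda>n. nstar (xs n)) \<longlonglongrightarrow> nstar x1" using cont by blast
    then have "eventually (\<lambda>n. nstar (xs n) < ennreal r) sequentially"
      using nx1 by (rule order_tendstoD(2))
    then obtain n where "nstar (xs n) < ennreal r" by (auto simp: eventually_sequentially)
    with ys(2)[of n] show False by (simp add: xs_def)
  qed
  then obtain n :: nat where n: "\<forall>y\<in>S. nstar (x1 + (t0 / real (Suc n)) *\<^sub>R y) \<le> ennreal r" by blast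
  define t where "t = t0 / real (Suc n)"
  have t: "t > 0" "t \<le> t0" using t0 by (auto simp: t_def field_simps)
  show ?thesis
  proof (intro exI conjI ballI)
    show "t > 0" by (fact t)
    fix y assume y: "y \<in> S"
    have inS: "x1 + t *\<^sub>R y \<in> S" using n y Sdef by (simp add: t_def)
    have "dist x0 (x1 + t *\<^sub>R y) < e"
    proof -
      have "x0 - (x1 + t *\<^sub>R y) = d *\<^sub>R x0 - t *\<^sub>R y" by (simp add: x1_def algebra_simps)
      then have "dist x0 (x1 + t *\<^sub>R y) \<le> norm (d *\<^sub>R x0) + norm (t *\<^sub>R y)"
        by (metis dist_norm norm_triangle_ineq4)
      also have "\<dots> = d * norm x0 + t * norm y" using d t by simp
      also have "t * norm y \<le> t0 * (C * r)"
        using bnd y t by (intro mult_mono) auto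
      finally show ?thesis using dx t0b by linarith
    qed
    then show "x1 + t *\<^sub>R y \<in> U \<inter> S" using inS e by auto
  qed
qed


theorem propositionG1:
  fixes S :: "'a::banach set"
  assumes "S \<noteq> {}"
    and "(closed S \<and> bounded S \<and> convex S) \<or>
         (\<exists>(r::real) (nstar :: 'a \<Rightarrow> ennreal) (\<kappa>::real) (C::real).
            r > 0 \<and> S = {x. nstar x \<le> ennreal r} \<and>
            \<kappa> \<ge> 1 \<and>
            (\<forall>\<alpha>::real. \<forall>x. nstar (\<alpha> *\<^sub>R x) = ennreal \<bar>\<alpha>\<bar> * nstar x) \<and>
            (\<forall>x y. nstar (x + y) \<le> ennreal \<kappa> * (nstar x + nstar y)) \<and>
            C \<ge> 1 \<and> (\<forall>x. ennreal (norm x) \<le> ennreal C * nstar x) \<and>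
            closed S \<and>
            (\<forall>xs x0. ((\<lambda>n. nstar (xs n - x0)) \<longlonglongrightarrow> 0) \<longrightarrow>
                       ((\<lambda>n. nstar (xs n)) \<longlonglongrightarrow> nstar x0)))"
    and "is_codec S E"
  shows "\<exists>x\<in>S. \<forall>l::nat. l \<ge> 1 \<longrightarrow>
           (\<exists>\<^sub>\<infinity>R::nat. R \<ge> 1 \<and>
              (optimal_rate S = \<infinity> \<or>
               norm (x - D R (E R x)) \<ge> real R powr (- (real_of_ereal (optimal_rate S) + 1 / real l))))"
  proof -
  from assms(2) show ?thesis
  proof
    assume h: "closed S \<and> bounded S \<and> convex S"
    then obtain a where a: "\<forall>x\<in>S. norm x \<le> a" by (auto simp: bounded_iff)
    define M where "M = max a 0"
    have M: "M \<ge> 0" "\<forall>y\<in>S. norm y \<le> M" using a by (auto simp: M_def intro: le_max_iff_disj[THEN iffD2])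
    show ?thesis
      by (rule key[OF assms(1) _ M(1) M(2) _ assms(3)])
         (use h case1P[OF _ M] in auto)
  next
    assume "\<exists>(r::real) (nstar :: 'a \<Rightarrow> ennreal) (\<kappa>::real) (C::real).
            r > 0 \<and> S = {x. nstar x \<le> ennreal r} \<and>
            \<kappa> \<ge> 1 \<and>
            (\<forall>\<alpha>::real. \<forall>x. nstar (\<alpha> *\<^sub>R x) = ennreal \<bar>\<alpha>\<bar> * nstar x) \<and>
            (\<forall>x y. nstar (x + y) \<le> ennreal \<kappa> * (nstar x + nstar y)) \<and>
            C \<ge> 1 \<and> (\<forall>x. ennreal (norm x) \<le> ennreal C * nstar x) \<and>
            closed S \<and>
            (\<forall>xs x0. ((\<lambda>n. nstar (xs n - x0)) \<longlonglongrightarrow> 0) \<longrightarrow>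
                       ((\<lambda>n. nstar (xs n)) \<longlonglongrightarrow> nstar x0))"
    then obtain r nstar \<kappa> C where h: "r > 0" "S = {x. nstar x \<le> ennreal r}"
      "\<forall>\<alpha>::real. \<forall>x. nstar (\<alpha> *\<^sub>R x) = ennreal \<bar>\<alpha>\<bar> * nstar x"
      "C \<ge> 1" "\<forall>x. ennreal (norm x) \<le> ennreal C * nstar x" "closed S"
      "\<forall>xs x0. ((\<lambda>n. nstar (xs n - x0)) \<longlonglongrightarrow> 0) \<longrightarrow> ((\<lambda>n. nstar (xs n)) \<longlonglongrightarrow> nstar x0)"
      by blast
    have M: "C * r \<ge> 0" using h by simp
    show ?thesis
      by (rule key[OF assms(1) h(6) M case2_bnd[OF h(1,2,4,5)] _ assms(3)])
         (rule case2P[OF h(1,2,3,4,5,7)])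
  qed
qed

end
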